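(* Let $\odot$ be a pseudo-multiplication on $[0,\infty]$ with left identity $1_{\odot}$. Then $\odot$ is non-degenerate (i.e. $O(1_{\odot})=0$) if and only if the monoid $([0,1_{\odot}],\odot)$ is commutative.
   Context: A pseudo-multiplication is a binary operation $\odot:[0,\infty]\times[0,\infty]\to[0,\infty]$ such that: $\odot$ is associative; $\odot$ is continuous on $(0,\infty)\times[0,\infty]$; for every $t$, the map $s\mapsto s\odot t$ is continuous on $(0,\infty]$; $\odot$ is nondecreasing in each argument; there is a left identity element $1_{\odot}$, i.e. $1_{\odot}\odot t=t$ for all $t$; there are no zero divisors, i.e. $s\odot t=0$ implies $s=0$ or $t=0$; and $0$ is an annihilator, i.e. $0\odot t=t\odot 0=0$ for all $t$. For $t\in[0,\infty]$ put $O(t)=\inf_{s>0} s\odot t$. The pseudo-multiplication $\odot$ is called non-degenerate if $O(1_{\odot})=0$. *)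

theory Defs
  imports "HOL-Analysis.Analysis" "HOL-Library.Extended_Nonnegative_Real"
begin

definition pseudo_mult :: "(ennreal \<Rightarrow> ennreal \<Rightarrow> ennreal) \<Rightarrow> ennreal \<Rightarrow> bool" where
  "pseudo_mult f e \<longleftrightarrow>
     (\<forall>a b c. f (f a b) c = f a (f b c)) \<and>
     continuous_on ({0<..<\<infinity>} \<times> UNIV) (\<lambda>(s, t). f s t) \<and>
     (\<forall>t. continuous_on {0<..} (\<lambda>s. f s t)) \<and>
     (\<forall>a b c d. a \<le> b \<longrightarrow> c \<le> d \<longrightarrow> f a c \<le> f b d) \<and>
     (\<forall>t. f e t = t) \<and>
     (\<forall>s t. f s t = 0 \<longrightarrow> s = 0 \<or> t = 0) \<and>
     (\<forall>t. f 0 t = 0 \<and> f t 0 = 0)"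

definition pm_O :: "(ennreal \<Rightarrow> ennreal \<Rightarrow> ennreal) \<Rightarrow> ennreal \<Rightarrow> ennreal" where
  "pm_O f t = (INF s\<in>{0<..}. f s t)"

definition non_degenerate :: "(ennreal \<Rightarrow> ennreal \<Rightarrow> ennreal) \<Rightarrow> ennreal \<Rightarrow> bool" where
  "non_degenerate f e \<longleftrightarrow> pm_O f e = 0"

end

theory Submission
  imports Defs
begin

primrec pw :: "(ennreal \<Rightarrow> ennreal \<Rightarrow> ennreal) \<Rightarrow> ennreal \<Rightarrow> ennreal \<Rightarrow> nat \<Rightarrow> ennreal" where
  "pw f e z 0 = e"
| "pw f e z (Suc n) = f z (pw f e z n)"

locale pm =
  fixes f :: "ennreal \<Rightarrow> ennreal \<Rightarrow> ennreal" and e :: ennreal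
  assumes P: "pseudo_mult f e"
begin

lemmas PD = P[unfolded pseudo_mult_def]
lemma assoc: "f (f a b) c = f a (f b c)" using PD by (elim conjE) (erule allE)+
lemma mono: "a \<le> b \<Longrightarrow> c \<le> d \<Longrightarrow> f a c \<le> f b d" using PD by (elim conjE) auto
lemma lid[simp]: "f e t = t" using PD by (elim conjE) (erule allE)
lemma zl[simp]: "f 0 t = 0" using PD by (elim conjE) auto
lemma zr[simp]: "f t 0 = 0" using PD by (elim conjE) auto
lemma cj: "continuous_on ({0<..<\<infinity>} \<times> UNIV) (\<lambda>(s, t). f s t)"
  using PD by (elim conjE)
lemma cl: "continuous_on {0<..} (\<lambda>s. f s t)"
  using PD by (elim conjE) (erule allE)

lemma e_pos: "0 < e"
proof (rule ccontr)
  assume "\<not> 0 < e" then have "e = 0" by (simp add: not_less)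
  then have "f e 1 = 0" by simp
  then show False by simp
qed

lemma le_right: "s \<le> e \<Longrightarrow> f s t \<le> t" using mono[of s e t t] by simp

lemma comm_imp_nd:
  assumes C: "\<forall>a\<in>{0..e}. \<forall>b\<in>{0..e}. f a b = f b a"
  shows "pm_O f e = 0"
proof -
  have le: "pm_O f e \<le> s" if "0 < s" "s \<le> e" for s
  proof -
    have "pm_O f e \<le> f s e" unfolding pm_O_def by (rule INF_lower) (use that in simp)
    also have "f s e = f e s" using C that by auto
    finally show ?thesis by simp
  qed
  have "pm_O f e \<le> 0"
  proof (rule dense_ge)
    fix y :: ennreal assume "0 < y"
    then have "pm_O f e \<le> min y e" using e_pos by (intro le) auto
    then show "pm_O f e \<le> y" by simp
  qed
  then show ?thesis by simp
qed

end

locale pmnd = pm + assumes ND: "pm_O f e = 0"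
begin

lemma rid: assumes "t \<le> e" shows "f t e = t"
proof (cases "t = 0")
  case True then show ?thesis by simp
next
  case False
  then have tp: "0 < t" by (simp add: zero_less_iff_neq_zero)
  have "(INF s\<in>{0<..}. f s e) < t" using ND tp unfolding pm_O_def by simp
  then obtain s0 where s0: "s0 > 0" "f s0 e < t" by (auto simp: INF_less_iff)
  have "s0 \<le> e"
  proof (rule ccontr)
    assume "\<not> s0 \<le> e"
    then have "f e e \<le> f s0 e" by (intro mono) auto
    then show False using s0 assms by simp
  qed
  have "continuous_on {s0..e} (\<lambda>s. f s e)"
    by (rule continuous_on_subset[OF cl]) (use s0 in auto)
  have "\<exists>u. s0 \<le> u \<and> u \<le> e \<and> f u e = t"
    by (rule IVT'[of "\<lambda>s. f s e" s0 t e]) (use s0 assms \<open>s0 \<le> e\<close> \<open>continuous_on {s0..e} (\<lambda>s. f s e)\<close> in \<open>auto intro: less_imp_le\<close>)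
  then obtain u where "f u e = t" by blast
  then show ?thesis using assoc[of u e e] by simp
qed

lemma le_left: "s \<le> e \<Longrightarrow> t \<le> e \<Longrightarrow> f s t \<le> s"
  using mono[of s s t e] rid[of s] by simp

lemma closedK: "s \<le> e \<Longrightarrow> t \<le> e \<Longrightarrow> f s t \<le> e"
  using le_right[of s t] by simp


abbreviation "K \<equiv> {..e} \<times> {..e}"

lemma contK0: assumes st: "s = 0" "t \<le> e"
  shows "((\<lambda>(s, t). f s t) \<longlongrightarrow> f s t) (at (s, t) within K)"
proof -
  let ?F = "\<lambda>(s, t). f s t"
  have inK: "eventually (\<lambda>p. p \<in> K) (at (s,t) within K)"
    by (simp add: eventually_at_filter)
  have "((\<lambda>p. fst p) \<longlongrightarrow> fst (s,t)) (at (s, t) within K)"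
    by (intro tendsto_intros)
  then have f0: "((\<lambda>p. fst p) \<longlongrightarrow> 0) (at (s, t) within K)" using st by simp
  have "eventually (\<lambda>p. ?F p \<le> fst p) (at (s,t) within K)"
    using inK by eventually_elim (auto intro: le_left)
  then have "(?F \<longlongrightarrow> 0) (at (s, t) within K)"
    by (intro tendsto_sandwich[OF _ _ tendsto_const f0]) auto
  then show ?thesis using st by simp
qed


lemma contKmid: assumes st: "0 < s" "s < \<infinity>"
  shows "((\<lambda>(s, t). f s t) \<longlongrightarrow> f s t) (at (s, t) within K)"
proof -
  let ?F = "\<lambda>(s, t). f s t"
  have "open ({0<..<(\<infinity>::ennreal)} \<times> (UNIV::ennreal set))"
    by (intro open_Times open_greaterThanLessThan open_UNIV)
  then have "isCont ?F (s,t)"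
    using cj st continuous_on_eq_continuous_at by fastforce
  then have "continuous (at (s,t) within K) ?F"
    using continuous_at_imp_continuous_at_within by blast
  then show ?thesis by (simp add: continuous_within)
qed

lemma contKtop: assumes st: "s = \<infinity>" "s \<le> e"
  shows "((\<lambda>(s, t). f s t) \<longlongrightarrow> f s t) (at (s, t) within K)"
proof -
  let ?F = "\<lambda>(s, t). f s t"
  have ee: "e = \<infinity>" using st by (simp add: top_unique)
  have ft: "f s t = t" by (simp only: st(1) ee[symmetric] lid)
  have snd_t: "((\<lambda>p. snd p) \<longlongrightarrow> t) (at (s, t) within K)"
    using tendsto_snd[OF tendsto_ident_at, of "(s,t)" K] by simp
  have fst_s: "((\<lambda>p. fst p) \<longlongrightarrow> \<infinity>) (at (s, t) within K)"
    using tendsto_fst[OF tendsto_ident_at, of "(s,t)" K] st by simp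
  show ?thesis unfolding ft
  proof (rule order_tendstoI)
    fix a assume "t < a"
    then have "eventually (\<lambda>p. snd p < a) (at (s, t) within K)"
      using order_tendstoD(2)[OF snd_t] by blast
    then show "eventually (\<lambda>p. ?F p < a) (at (s, t) within K)"
    proof eventually_elim
      case (elim p)
      have "fst p \<le> e" unfolding ee infinity_ennreal_def by (rule top_greatest)
      from le_less_trans[OF le_right[OF this] elim] show ?case by (simp add: case_prod_beta)
    qed
  next
    fix a assume a: "a < t"
    have lim: "(\<lambda>n. f (of_nat n) t) \<longlonglongrightarrow> f \<infinity> t"
      using continuous_on_tendsto_compose[OF cl of_nat_tendsto_top_ennreal, of t]
      by simp
    have "a < f \<infinity> t" using a ft st(1) by simp
    from order_tendstoD(1)[OF lim this]
    have "eventually (\<lambda>n. a < f (of_nat n) t) sequentially" .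
    then obtain N where N: "\<And>n. n \<ge> N \<Longrightarrow> a < f (of_nat n) t"
      unfolding eventually_sequentially by blast
    define n where "n = Suc N"
    have n: "a < f (of_nat n) t" "n \<ge> 1" using N[of n] by (auto simp: n_def)
    define c where "c = (of_nat n :: ennreal)"
    have c: "0 < c" "c < \<infinity>" using n(2) by (auto simp: c_def of_nat_less_top)
    have "continuous_on UNIV (\<lambda>u. ?F (c, u))"
      by (rule continuous_on_compose2[OF cj]) (use c in \<open>auto intro!: continuous_intros\<close>)
    then have "isCont (\<lambda>u. f c u) t" by (simp add: continuous_on_eq_continuous_at)
    then have "((\<lambda>p. f c (snd p)) \<longlongrightarrow> f c t) (at (s, t) within K)"
      using isCont_tendsto_compose[OF _ snd_t] by blast
    then have ev1: "eventually (\<lambda>p. a < f c (snd p)) (at (s, t) within K)"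
      using n(1) order_tendstoD(1) unfolding c_def by blast
    have ev2: "eventually (\<lambda>p. c < fst p) (at (s, t) within K)"
      using order_tendstoD(1)[OF fst_s c(2)] .
    show "eventually (\<lambda>p. a < ?F p) (at (s, t) within K)"
      using ev1 ev2
    proof eventually_elim
      case (elim p)
      then have "f c (snd p) \<le> f (fst p) (snd p)" by (intro mono less_imp_le order_refl)
      from less_le_trans[OF elim(1) this] have "a < f (fst p) (snd p)" .
      then show ?case by (simp add: case_prod_beta)
    qed
  qed
qed

lemma contK: "continuous_on K (\<lambda>(s, t). f s t)"
  unfolding continuous_on_def
proof (intro ballI)
  fix p assume "p \<in> K"
  then obtain s t where p: "p = (s,t)" and st: "s \<le> e" "t \<le> e" by (cases p) auto
  show "((\<lambda>(s, t). f s t) \<longlongrightarrow> (\<lambda>(s, t). f s t) p) (at p within K)"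
  proof (cases "s = 0")
    case True then show ?thesis using contK0[OF True st(2)] p by simp
  next
    case False
    show ?thesis
    proof (cases "s = \<infinity>")
      case True then show ?thesis using contKtop[OF True, of t] st p by simp
    next
      case F2: False
      have "0 < s" using False by (simp add: zero_less_iff_neq_zero)
      moreover have "s < \<infinity>" using F2 by (simp add: less_top)
      ultimately show ?thesis using contKmid[of s t] p by simp
    qed
  qed
qed


lemma Kdef: "{0..e} = {..e}" by auto

lemma contL: "t \<le> e \<Longrightarrow> continuous_on {..e} (\<lambda>s. f s t)"
  by (rule continuous_on_compose2[OF contK, of _ "\<lambda>s. (s, t)", simplified])
     (auto intro!: continuous_intros)

lemma contR: "s \<le> e \<Longrightarrow> continuous_on {..e} (\<lambda>t. f s t)"
  by (rule continuous_on_compose2[OF contK, of _ "\<lambda>t. (s, t)", simplified])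
     (auto intro!: continuous_intros)

lemma contD: "continuous_on {..e} (\<lambda>s. f s s)"
  by (rule continuous_on_compose2[OF contK, of _ "\<lambda>t. (t, t)", simplified])
     (auto intro!: continuous_intros)

lemma pw_le: "z \<le> e \<Longrightarrow> pw f e z n \<le> e"
  by (induction n) (auto intro: closedK)

lemma pw_add: "pw f e z (a + b) = f (pw f e z a) (pw f e z b)"
  by (induction a) (auto simp: assoc)

lemma pw_one: "z \<le> e \<Longrightarrow> pw f e z 1 = z"
  by (simp add: rid)

lemma pw_Suc': "z \<le> e \<Longrightarrow> pw f e z (Suc n) = f (pw f e z n) z"
  using pw_add[of z n 1] pw_one[of z] by simp

lemma pw_Suc_le: "z \<le> e \<Longrightarrow> pw f e z (Suc n) \<le> pw f e z n"
  using le_right[of z "pw f e z n"] by simp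

lemma pw_anti: assumes "z \<le> e" "m \<le> n" shows "pw f e z n \<le> pw f e z m"
  using assms(2) by (induction n rule: dec_induct) (use pw_Suc_le[OF assms(1)] in \<open>auto intro: order_trans simp del: pw.simps(2)\<close>)

lemma pw_mono: "z \<le> w \<Longrightarrow> pw f e z n \<le> pw f e w n"
  by (induction n) (auto intro: mono)

lemma pw_cont: "continuous_on {..e} (\<lambda>z. pw f e z n)"
proof (induction n)
  case 0 then show ?case by (simp add: continuous_on_const)
next
  case (Suc n)
  have "continuous_on {..e} (\<lambda>z. (\<lambda>(s, t). f s t) (z, pw f e z n))"
    by (rule continuous_on_compose2[OF contK])
       (use Suc pw_le in \<open>auto intro!: continuous_intros\<close>)
  then show ?case by simp
qed

lemma pw_idem: "f i i = i \<Longrightarrow> i \<le> e \<Longrightarrow> pw f e i (Suc n) = i"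
  by (induction n) (auto simp: rid)

lemma idem_below:
  assumes i: "i \<le> e" "f i i = i" and y: "y \<le> i"
  shows "f i y = y" "f y i = y"
proof -
  have "\<exists>u. 0 \<le> u \<and> u \<le> e \<and> f i u = y"
    by (rule IVT') (use i y contR[of i] in \<open>auto simp: Kdef rid\<close>)
  then obtain u where "f i u = y" by blast
  then show "f i y = y" using assoc[of i i u] i by simp
  have "\<exists>u. 0 \<le> u \<and> u \<le> e \<and> f u i = y"
    by (rule IVT') (use i y contL[of i] in \<open>auto simp: Kdef\<close>)
  then obtain v where "f v i = y" by blast
  then show "f y i = y" using assoc[of v i i] i by simp
qed

lemma idem_above:
  assumes i: "i \<le> e" "f i i = i" and y: "i \<le> y" "y \<le> e"
  shows "f i y = i" "f y i = i"
proof -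
  have "f i i \<le> f i y" "f i y \<le> f i e" by (auto intro: mono y)
  then show "f i y = i" using i by (auto simp: rid intro: antisym)
  have "f i i \<le> f y i" "f y i \<le> f e i"
    by (rule mono[OF y(1) order_refl], rule mono[OF y(2) order_refl])
  then show "f y i = i" using i by (auto intro: antisym)
qed

lemma comm_le: assumes xy: "x \<le> y" "y \<le> e" shows "f x y = f y x"
proof -
  have xe: "x \<le> e" using xy by simp
  define I where "I = {i \<in> {x..e}. i \<le> f i i}"
  have gc: "continuous_on UNIV (\<lambda>i. f (min i e) (min i e))"
    by (rule continuous_on_compose2[OF contD, of _ "\<lambda>i. min i e", simplified])
       (auto intro!: continuous_intros)
  have "I = {x..e} \<inter> {i. i \<le> f (min i e) (min i e)}"
    unfolding I_def by auto
  moreover have "closed {i. i \<le> f (min i e) (min i e)}"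
    by (rule closed_Collect_le[OF continuous_on_id gc])
  ultimately have Iclosed: "closed I" by auto
  have eI: "e \<in> I" using xe by (simp add: I_def)
  define b where "b = Inf I"
  have bI: "b \<in> I" using closed_contains_Inf_cl[OF Iclosed] eI b_def by auto
  have b: "x \<le> b" "b \<le> e" "f b b = b"
    using bI le_left[of b b] by (auto simp: I_def intro: antisym)
  have bmin: "\<And>i. x \<le> i \<Longrightarrow> i \<le> e \<Longrightarrow> f i i = i \<Longrightarrow> b \<le> i"
    unfolding b_def by (rule Inf_lower) (simp add: I_def)
  show ?thesis
  proof (cases "b \<le> y")
    case True
    have 1: "f x b = x" "f b x = x" using idem_below[OF b(2) b(3) b(1)] by auto
    have 2: "f b y = b" "f y b = b" using idem_above[OF b(2) b(3) True xy(2)] by auto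
    have "f x y = x" using assoc[of x b y] 1 2 by simp
    moreover have "f y x = x" using assoc[of y b x] 1 2 by simp
    ultimately show ?thesis by simp
  next
    case False
    then have yb: "y < b" by simp
    have roots: "\<forall>n. \<exists>r. x \<le> r \<and> r \<le> b \<and> pw f e r (Suc n) = x"
    proof
      fix n
      show "\<exists>r. x \<le> r \<and> r \<le> b \<and> pw f e r (Suc n) = x"
      proof (rule IVT')
        show "pw f e x (Suc n) \<le> x" using pw_anti[OF xe, of 1 "Suc n"] pw_one[OF xe] by simp
        show "x \<le> pw f e b (Suc n)" using pw_idem[OF b(3) b(2)] b(1) by simp
        show "x \<le> b" by (rule b(1))
        show "continuous_on {x..b} (\<lambda>z. pw f e z (Suc n))"
          by (rule continuous_on_subset[OF pw_cont]) (use b in auto)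
      qed
    qed
    then obtain r where r: "\<And>n. x \<le> r n" "\<And>n. r n \<le> b" "\<And>n. pw f e (r n) (Suc n) = x"
      by metis
    have re: "r n \<le> e" for n using r(2)[of n] b(2) by (rule order_trans)
    have rlim: "r \<longlonglongrightarrow> b"
    proof (rule order_tendstoI)
      fix a assume "b < a"
      then show "eventually (\<lambda>n. r n < a) sequentially"
        by (intro always_eventually allI) (rule le_less_trans[OF r(2)])
    next
      fix a assume ab: "a < b"
      show "eventually (\<lambda>n. a < r n) sequentially"
      proof (cases "a < x")
        case True then show ?thesis
          by (intro always_eventually allI) (rule less_le_trans[OF True r(1)])
      next
        case False then have xa: "x \<le> a" by simp
        have ae: "a \<le> e" using ab b(2) by simp
        have "\<exists>m0. pw f e a m0 < x"
        proof (rule ccontr)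
          assume "\<not> ?thesis"
          then have ge: "\<And>m. x \<le> pw f e a m" by (simp add: not_less)
          define M where "M = (INF m. pw f e a m)"
          have dec: "decseq (\<lambda>m. pw f e a m)" unfolding decseq_def using pw_anti[OF ae] by blast
          have lim: "(\<lambda>m. pw f e a m) \<longlonglongrightarrow> M" unfolding M_def by (rule LIMSEQ_INF[OF dec])
          have Mx: "x \<le> M" unfolding M_def by (rule INF_greatest) (rule ge)
          have Ma: "M \<le> a" unfolding M_def
            using INF_lower[of 1 UNIV "\<lambda>m. pw f e a m"] pw_one[OF ae] by simp
          have Me: "M \<le> e" using Ma ae by simp
          have l1: "(\<lambda>m. f (pw f e a m) a) \<longlonglongrightarrow> f M a"
            by (rule continuous_on_tendsto_compose[OF contL[OF ae] lim]) (use Me pw_le[OF ae] in auto)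
          have "(\<lambda>m. f (pw f e a m) a) = (\<lambda>m. pw f e a (Suc m))"
            using pw_Suc'[OF ae] by simp
          then have l2: "(\<lambda>m. f (pw f e a m) a) \<longlonglongrightarrow> M" using LIMSEQ_Suc[OF lim] by simp
          have MaM: "f M a = M" using LIMSEQ_unique[OF l1 l2] .
          have Mp: "f M (pw f e a m) = M" for m
          proof (induction m)
            case 0 then show ?case by (simp add: rid[OF Me])
          next
            case (Suc m)
            have "f M (pw f e a (Suc m)) = f (f M a) (pw f e a m)" by (simp add: assoc)
            then show ?case using Suc MaM by simp
          qed
          have l3: "(\<lambda>m. f M (pw f e a m)) \<longlonglongrightarrow> f M M"
            by (rule continuous_on_tendsto_compose[OF contR[OF Me] lim]) (use Me pw_le[OF ae] in auto)
          then have "f M M = M" using Mp by (simp add: LIMSEQ_const_iff)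
          then have "b \<le> M" using bmin Mx Me by blast
          then show False using Ma ab by simp
        qed
        then obtain m0 where m0: "pw f e a m0 < x" by blast
        show ?thesis unfolding eventually_sequentially
        proof (intro exI allI impI)
          fix n assume mn: "m0 \<le> n"
          show "a < r n"
          proof (rule ccontr)
            assume "\<not> a < r n" then have ra: "r n \<le> a" by simp
            have "x = pw f e (r n) (Suc n)" using r(3) by simp
            also have "\<dots> \<le> pw f e (r n) m0" using pw_anti[OF re, of m0 "Suc n"] mn by simp
            also have "\<dots> \<le> pw f e a m0" using pw_mono[OF ra] .
            finally show False using m0 by simp
          qed
        qed
      qed
    qed
    have brk: "\<exists>z. f x y \<le> z \<and> f y x \<le> z \<and> f z (r n) \<le> f x y \<and> f z (r n) \<le> f y x" for n
    proof -
      let ?r = "r n"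
      let ?p = "pw f e ?r"
      have P: "?p (Suc n) \<le> y" using r(3)[of n] xy by simp
      define k where "k = (LEAST k. ?p (Suc k) \<le> y)"
      have k1: "?p (Suc k) \<le> y" unfolding k_def by (rule LeastI[of "\<lambda>k. ?p (Suc k) \<le> y", OF P])
      have k2: "y \<le> ?p k"
      proof (cases k)
        case 0 then show ?thesis using xy by simp
      next
        case (Suc j)
        have "\<not> ?p (Suc j) \<le> y"
          using not_less_Least[of j "\<lambda>k. ?p (Suc k) \<le> y"] Suc k_def by simp
        then show ?thesis using Suc by simp
      qed
      define w where "w = ?p k"
      define z where "z = f x w"
      have xp: "x = ?p (Suc n)" using r(3) by simp
      have zx: "f w x = z" unfolding z_def w_def
        using pw_add[of ?r k "Suc n"] pw_add[of ?r "Suc n" k] xp by (simp add: add.commute)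
      have wr: "f w ?r = ?p (Suc k)" unfolding w_def using pw_Suc'[OF re[of n], of k] by simp
      have rx: "f ?r x = f x ?r" using pw_Suc'[OF re[of n], of "Suc n"] xp pw.simps(2)[of f e "r n" "Suc n"] by metis
      have "f x y \<le> z" unfolding z_def by (rule mono[OF order_refl]) (simp add: w_def k2)
      moreover have "f y x \<le> z" unfolding zx[symmetric]
        by (rule mono[OF _ order_refl]) (simp add: w_def k2)
      moreover have "f z ?r \<le> f x y"
      proof -
        have "f z ?r = f x (f w ?r)" unfolding z_def by (simp add: assoc)
        also have "\<dots> \<le> f x y" by (rule mono[OF order_refl]) (use wr k1 in simp)
        finally show ?thesis .
      qed
      moreover have "f z ?r \<le> f y x"
      proof -
        have "f z ?r = f (f w ?r) x" unfolding zx[symmetric] by (simp add: assoc rx)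
        also have "\<dots> \<le> f y x" by (rule mono[OF _ order_refl]) (use wr k1 in simp)
        finally show ?thesis .
      qed
      ultimately show ?thesis by blast
    qed
    have hx: "f x y \<le> x" using le_left[OF xe xy(2)] .
    have hx2: "f y x \<le> x" using le_right[OF xy(2)] .
    show ?thesis
    proof (rule ccontr)
      assume ne: "f x y \<noteq> f y x"
      define lo where "lo = min (f x y) (f y x)"
      define hi where "hi = max (f x y) (f y x)"
      have lohi: "lo < hi" using ne by (auto simp: lo_def hi_def min_def max_def)
      have hb: "hi \<le> b" using hx hx2 b(1) by (auto simp: hi_def)
      have he: "hi \<le> e" using hb b(2) by simp
      have "(\<lambda>n. f hi (r n)) \<longlonglongrightarrow> f hi b"
        by (rule continuous_on_tendsto_compose[OF contR[OF he] rlim]) (use b(2) re in auto)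
      moreover have "f hi b = hi" using idem_below(2)[OF b(2) b(3) hb] .
      ultimately have "eventually (\<lambda>n. lo < f hi (r n)) sequentially"
        using lohi order_tendstoD(1) by metis
      then obtain N where N: "\<And>n. n \<ge> N \<Longrightarrow> lo < f hi (r n)"
        unfolding eventually_sequentially by blast
      have n: "lo < f hi (r N)" using N by simp
      obtain z where z: "f x y \<le> z" "f y x \<le> z" "f z (r N) \<le> f x y" "f z (r N) \<le> f y x"
        using brk by blast
      have "hi \<le> z" using z by (simp add: hi_def)
      then have "f hi (r N) \<le> f z (r N)" by (rule mono[OF _ order_refl])
      also have "\<dots> \<le> lo" using z by (simp add: lo_def)
      finally show False using n by simp
    qed
  qed
qed

lemma comm: "a \<le> e \<Longrightarrow> b \<le> e \<Longrightarrow> f a b = f b a"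
  by (cases "a \<le> b") (auto intro: comm_le comm_le[symmetric])

end

theorem lemma2p7:
  fixes f :: "ennreal \<Rightarrow> ennreal \<Rightarrow> ennreal" and e :: ennreal
  assumes "pseudo_mult f e"
  shows "non_degenerate f e \<longleftrightarrow> (\<forall>a\<in>{0..e}. \<forall>b\<in>{0..e}. f a b = f b a)"
proof -
  interpret pm f e by (rule pm.intro) (rule assms)
  show ?thesis
  proof
    assume nd: "non_degenerate f e"
    interpret pmnd f e
      by (rule pmnd.intro[OF pm_axioms]) (use nd in \<open>simp add: pmnd_axioms_def non_degenerate_def\<close>)
    show "\<forall>a\<in>{0..e}. \<forall>b\<in>{0..e}. f a b = f b a" using comm by auto
  next
    assume "\<forall>a\<in>{0..e}. \<forall>b\<in>{0..e}. f a b = f b a"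
    then show "non_degenerate f e" unfolding non_degenerate_def by (rule comm_imp_nd)
  qed
qed

end
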